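(* Let $H_0,H_1$ be complex Hilbert spaces, $G$ a densely defined closed operator from $H_0$ into $H_1$ and $D$ a densely defined closed operator from $H_1$ into $H_0$ with $-G^*\subset D$. If $u\in\mathrm{BD}(G)$, then $Gu\in\mathrm{BD}(D)$. If $q\in\mathrm{BD}(D)$, then $Dq\in\mathrm{BD}(G)$.
   Context: $\mathring D=-G^*$, $\mathring G=-D^*$. Domains carry graph inner products, e.g. $(u,v)_{\mathrm{dom}(G)}=(u,v)_{H_0}+(Gu,Gv)_{H_1}$. $\mathrm{BD}(G)$ is the orthogonal complement of $\mathrm{dom}(\mathring G)$ in $\mathrm{dom}(G)$ and $\mathrm{BD}(D)$ the orthogonal complement of $\mathrm{dom}(\mathring D)$ in $\mathrm{dom}(D)$. *)

theory Defs
  imports "HOL-Analysis.Analysis"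
begin

class complex_vector = ab_group_add +
  fixes scaleC :: "complex \<Rightarrow> 'a \<Rightarrow> 'a" (infixr \<open>*\<^sub>C\<close> 75)
  assumes scaleC_add_right: "a *\<^sub>C (x + y) = a *\<^sub>C x + a *\<^sub>C y"
    and scaleC_add_left: "(a + b) *\<^sub>C x = a *\<^sub>C x + b *\<^sub>C x"
    and scaleC_scaleC: "a *\<^sub>C (b *\<^sub>C x) = (a * b) *\<^sub>C x"
    and scaleC_one: "1 *\<^sub>C x = x"

text \<open>Complex inner product space; the inner product is linear in the first
  and conjugate-linear in the second argument.\<close>
class complex_inner = real_normed_vector + complex_vector +
  fixes cinner :: "'a \<Rightarrow> 'a \<Rightarrow> complex"
  assumes scaleR_scaleC: "scaleR r x = complex_of_real r *\<^sub>C x"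
    and cinner_add_left: "cinner (x + y) z = cinner x z + cinner y z"
    and cinner_scaleC_left: "cinner (c *\<^sub>C x) y = c * cinner x y"
    and cinner_commute: "cinner y x = cnj (cinner x y)"
    and cinner_nonneg: "0 \<le> Re (cinner x x)"
    and cinner_eq_zero_iff: "cinner x x = 0 \<longleftrightarrow> x = 0"
    and norm_eq_sqrt_cinner: "norm x = sqrt (Re (cinner x x))"

class chilbert_space = complex_inner + complete_space

section \<open>Operators given by a domain and an action on it\<close>

definition csubspace :: "'a::complex_vector set \<Rightarrow> bool" where
  "csubspace S \<longleftrightarrow> 0 \<in> S \<and> (\<forall>x\<in>S. \<forall>y\<in>S. x + y \<in> S) \<and> (\<forall>c. \<forall>x\<in>S. c *\<^sub>C x \<in> S)"

definition clinear_on :: "'a::complex_vector set \<Rightarrow> ('a \<Rightarrow> 'b::complex_vector) \<Rightarrow> bool" where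
  "clinear_on S f \<longleftrightarrow> (\<forall>x\<in>S. \<forall>y\<in>S. f (x + y) = f x + f y) \<and> (\<forall>c. \<forall>x\<in>S. f (c *\<^sub>C x) = c *\<^sub>C f x)"

definition op_graph :: "'a set \<Rightarrow> ('a \<Rightarrow> 'b) \<Rightarrow> ('a \<times> 'b) set" where
  "op_graph S f = {(x, f x) | x. x \<in> S}"

definition densely_defined_closed_op ::
  "'a::chilbert_space set \<Rightarrow> ('a \<Rightarrow> 'b::chilbert_space) \<Rightarrow> bool" where
  "densely_defined_closed_op S f \<longleftrightarrow>
     csubspace S \<and> clinear_on S f \<and> closure S = UNIV \<and> closed (op_graph S f)"

definition adj_dom :: "'a::complex_inner set \<Rightarrow> ('a \<Rightarrow> 'b::complex_inner) \<Rightarrow> 'b set" where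
  "adj_dom S f = {v. \<exists>w. \<forall>u\<in>S. cinner (f u) v = cinner u w}"

definition adj :: "'a::complex_inner set \<Rightarrow> ('a \<Rightarrow> 'b::complex_inner) \<Rightarrow> 'b \<Rightarrow> 'a" where
  "adj S f v = (SOME w. \<forall>u\<in>S. cinner (f u) v = cinner u w)"

definition op_subset :: "'a set \<Rightarrow> ('a \<Rightarrow> 'b) \<Rightarrow> 'a set \<Rightarrow> ('a \<Rightarrow> 'b) \<Rightarrow> bool" where
  "op_subset T g S f \<longleftrightarrow> T \<subseteq> S \<and> (\<forall>x\<in>T. g x = f x)"

definition graph_inner :: "('a::complex_inner \<Rightarrow> 'b::complex_inner) \<Rightarrow> 'a \<Rightarrow> 'a \<Rightarrow> complex" where
  "graph_inner f u v = cinner u v + cinner (f u) (f v)"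

text \<open>BD of the operator (SG, G) paired with (SD, D): the orthogonal complement,
  in dom(G) with the graph inner product, of dom(G-ring) = dom(-D*) = dom(D*).\<close>
definition BD :: "'a::complex_inner set \<Rightarrow> ('a \<Rightarrow> 'b::complex_inner) \<Rightarrow> 'b set \<Rightarrow> ('b \<Rightarrow> 'a) \<Rightarrow> 'a set" where
  "BD SG G SD D = {u \<in> SG. \<forall>v \<in> adj_dom SD D. graph_inner G u v = 0}"

end

theory Submission imports Defs begin

lemma cinner_zero_left[simp]: "cinner 0 (y::'a::complex_inner) = 0"
  using cinner_add_left[of "0::'a" 0 y] by simp
lemma cinner_minus_left: "cinner (- x) (y::'a::complex_inner) = - cinner x y"
  using cinner_add_left[of x "-x" y] by (simp add: eq_neg_iff_add_eq_0 add.commute)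
lemma cinner_diff_left: "cinner (x - z) (y::'a::complex_inner) = cinner x y - cinner z y"
  using cinner_add_left[of x "-z" y] by (simp add: cinner_minus_left)
lemma cinner_add_right: "cinner (x::'a::complex_inner) (y + z) = cinner x y + cinner x z"
  by (metis cinner_commute cinner_add_left complex_cnj_add)
lemma cinner_scaleC_right: "cinner (x::'a::complex_inner) (c *\<^sub>C y) = cnj c * cinner x y"
  by (metis cinner_commute cinner_scaleC_left complex_cnj_mult)
lemma cinner_zero_right[simp]: "cinner (x::'a::complex_inner) 0 = 0"
  by (metis cinner_commute cinner_zero_left complex_cnj_zero)
lemma cinner_minus_right: "cinner (x::'a::complex_inner) (- y) = - cinner x y"
  by (metis cinner_commute cinner_minus_left complex_cnj_minus)
lemma cinner_diff_right: "cinner (x::'a::complex_inner) (y - z) = cinner x y - cinner x z"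
  by (metis cinner_commute cinner_diff_left complex_cnj_diff)
lemma cinner_scaleR_left: "cinner (scaleR r x) (y::'a::complex_inner) = of_real r * cinner x y"
  by (simp add: scaleR_scaleC cinner_scaleC_left)
lemma cinner_scaleR_right: "cinner (x::'a::complex_inner) (scaleR r y) = of_real r * cinner x y"
  by (simp add: scaleR_scaleC cinner_scaleC_right)
lemma cinner_self: "cinner (x::'a::complex_inner) x = complex_of_real (norm x ^ 2)"
proof (rule complex_eqI)
  have "cinner x x = cnj (cinner x x)" by (rule cinner_commute)
  then have "Im (cinner x x) = Im (cnj (cinner x x))" by simp
  then have "Im (cinner x x) = - Im (cinner x x)" by simp
  then show "Im (cinner x x) = Im (complex_of_real (norm x ^ 2))" by simp
  show "Re (cinner x x) = Re (complex_of_real (norm x ^ 2))"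
    using cinner_nonneg[of x] by (simp add: norm_eq_sqrt_cinner)
qed
lemma Re_cinner_sym: "Re (cinner (y::'a::complex_inner) x) = Re (cinner x y)"
  using cinner_commute[of y x] by simp
lemma norm_add_sq: "norm (x + y::'a::complex_inner) ^ 2 = norm x ^ 2 + 2 * Re (cinner x y) + norm y ^ 2"
proof -
  have "complex_of_real (norm (x + y) ^ 2) = cinner x x + cinner x y + cinner y x + cinner y y"
    by (simp only: cinner_self[symmetric] cinner_add_left cinner_add_right add.assoc add.left_commute)
  then have "norm (x + y) ^ 2 = Re (cinner x x + cinner x y + cinner y x + cinner y y)"
    by (metis Re_complex_of_real)
  then show ?thesis by (simp add: cinner_self Re_cinner_sym[of y x])
qed
lemma norm_diff_sq: "norm (x - y::'a::complex_inner) ^ 2 = norm x ^ 2 - 2 * Re (cinner x y) + norm y ^ 2"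
  using norm_add_sq[of x "-y"] by (simp add: cinner_minus_right)


lemma csub_scaleR: "csubspace M \<Longrightarrow> (x::'a::complex_inner) \<in> M \<Longrightarrow> scaleR r x \<in> M"
  unfolding scaleR_scaleC csubspace_def by blast
lemma csub_add: "csubspace M \<Longrightarrow> x \<in> M \<Longrightarrow> y \<in> M \<Longrightarrow> x + y \<in> M"
  by (simp add: csubspace_def)
lemma csub_scaleC: "csubspace M \<Longrightarrow> x \<in> M \<Longrightarrow> c *\<^sub>C x \<in> M"
  by (simp add: csubspace_def)

lemma proj_exists:
  fixes M :: "'a::chilbert_space set" and x :: 'a
  assumes sub: "csubspace M" and cl: "closed M"
  shows "\<exists>m\<in>M. \<forall>n\<in>M. norm (x - m)^2 \<le> norm (x - n)^2"
proof -
  define d where "d = Inf ((\<lambda>m. norm (x - m)^2) ` M)"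
  have M0: "0 \<in> M" using sub by (simp add: csubspace_def)
  have bdd: "bdd_below ((\<lambda>m. norm (x - m)^2) ` M)" by (rule bdd_belowI[of _ 0]) auto
  have dle: "d \<le> norm (x-m)^2" if "m \<in> M" for m unfolding d_def using bdd that by (auto intro: cInf_lower)
  have "\<exists>m\<in>M. norm (x-m)^2 < d + 1/Suc k" for k
  proof -
    have "Inf ((\<lambda>m. norm (x - m)^2) ` M) < d + 1/Suc k" by (simp add: d_def)
    from cInf_lessD[OF _ this] M0 show ?thesis by auto
  qed
  then obtain ms where ms: "\<And>k. ms k \<in> M \<and> norm (x - ms k)^2 < d + 1/Suc k" by metis
  have par: "norm (ms i - ms j)^2 < 2/Suc i + 2/Suc j" for i j
  proof -
    define a where "a = x - ms i"
    define b where "b = x - ms j"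
    have mid: "scaleR (1/2) (ms i + ms j) \<in> M" using ms sub by (simp add: csub_scaleR csub_add)
    have ab: "a + b = scaleR 2 (x - scaleR (1/2) (ms i + ms j))" unfolding a_def b_def
      by (simp add: algebra_simps scaleR_2)
    have "norm (a + b)^2 = 4 * norm (x - scaleR (1/2) (ms i + ms j))^2"
      unfolding ab by (simp add: power_mult_distrib)
    then have "norm (a+b)^2 \<ge> 4 * d" using dle[OF mid] by simp
    moreover have "norm (a+b)^2 + norm (a-b)^2 = 2 * norm a^2 + 2 * norm b^2"
      by (simp add: norm_add_sq norm_diff_sq)
    moreover have "a - b = ms j - ms i" unfolding a_def b_def by simp
    moreover have "norm (ms i - ms j) = norm (ms j - ms i)" by (rule norm_minus_commute)
    ultimately show ?thesis using ms[of i] ms[of j] unfolding a_def b_def by simp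
  qed
  have "Cauchy ms"
  proof (rule metric_CauchyI)
    fix e :: real assume e: "0 < e"
    obtain N :: nat where N: "4 / e^2 < N" using reals_Archimedean2 by blast
    have "4 / Suc N < e^2"
    proof -
      have "4 / e^2 < Suc N" using N by simp
      then show ?thesis using e by (simp add: field_simps)
    qed
    show "\<exists>M. \<forall>m\<ge>M. \<forall>n\<ge>M. dist (ms m) (ms n) < e"
    proof (intro exI allI impI)
      fix i j assume ij: "N \<le> i" "N \<le> j"
      have "2/Suc i \<le> 2 / Suc N" "2/Suc j \<le> 2 / Suc N" using ij by (auto simp: frac_le)
      then have "norm (ms i - ms j)^2 < e^2" using par[of i j] \<open>4 / Suc N < e^2\<close> by simp
      then have "norm (ms i - ms j) < e" using e by (simp add: power_less_imp_less_base)
      then show "dist (ms i) (ms j) < e" by (simp add: dist_norm)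
    qed
  qed
  then obtain m where lim: "ms \<longlonglongrightarrow> m" using Cauchy_convergent_iff convergent_def by blast
  have mM: "m \<in> M" using closed_sequentially[OF cl] ms lim by blast
  have "(\<lambda>k. norm (x - ms k)^2) \<longlonglongrightarrow> norm (x - m)^2" by (intro tendsto_intros lim)
  moreover have "(\<lambda>k. d + 1/Suc k) \<longlonglongrightarrow> d"
    using tendsto_add[OF tendsto_const LIMSEQ_inverse_real_of_nat, of d] by (simp add: inverse_eq_divide)
  ultimately have "norm (x - m)^2 \<le> d"
    by (rule LIMSEQ_le) (use ms less_imp_le in blast)
  then show ?thesis using mM dle by (meson order_trans)
qed

lemma proj_orth:
  fixes M :: "'a::chilbert_space set"
  assumes sub: "csubspace M" and mM: "m \<in> M" and mn: "\<forall>n\<in>M. norm (x - m)^2 \<le> norm (x - n)^2"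
  shows "\<forall>n\<in>M. cinner n (x - m) = 0"
proof -
  define e where "e = x - m"
  have re: "Re (cinner e n) = 0" if nM: "n \<in> M" for n
  proof -
    define r where "r = Re (cinner e n)"
    define N where "N = norm n ^ 2"
    have N0: "N \<ge> 0" unfolding N_def by simp
    have key: "2 * t * r \<le> t^2 * N" for t
    proof -
      have "m + scaleR t n \<in> M" using sub mM nM by (simp add: csub_add csub_scaleR)
      then have "norm (x - m) ^2 \<le> norm (x - (m + scaleR t n))^2" using mn by blast
      moreover have "x - (m + scaleR t n) = e - scaleR t n" unfolding e_def by simp
      ultimately have "norm e ^2 \<le> norm (e - scaleR t n)^2" unfolding e_def by simp
      also have "\<dots> = norm e^2 - 2 * t * r + t^2 * N"
        unfolding norm_diff_sq r_def N_def by (simp add: cinner_scaleR_right power_mult_distrib power2_abs)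
      finally show ?thesis by simp
    qed
    have "2 * (r / (N+1)) * r \<le> (r/(N+1))^2 * N" by (rule key)
    then have "2 * (r / (N+1)) * r * (N+1)^2 \<le> (r/(N+1))^2 * N * (N+1)^2"
      by (rule mult_right_mono) simp
    moreover have "2 * (r / (N+1)) * r * (N+1)^2 = 2 * r^2 * (N+1)" using N0
      by (simp add: field_simps power2_eq_square)
    moreover have "(r/(N+1))^2 * N * (N+1)^2 = r^2 * N"
    proof -
      have "r/(N+1) * (N+1) = r" using N0 by simp
      then have "(r/(N+1))^2 * (N+1)^2 = r^2" using power_mult_distrib[of "r/(N+1)" "N+1" 2] by simp
      moreover have "(r/(N+1))^2 * N * (N+1)^2 = ((r/(N+1))^2 * (N+1)^2) * N" by (simp only: mult_ac)
      ultimately show ?thesis by simp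
    qed
    ultimately have "2 * r^2 * (N+1) \<le> r^2 * N" by simp
    then have "r^2 * (N + 2) \<le> 0" by (simp add: distrib_left distrib_right mult.commute)
    moreover have "r^2 * (N + 2) \<ge> 0" using N0 by simp
    ultimately have "r^2 * (N + 2) = 0" by linarith
    then have "r^2 = 0" using N0 by simp
    then show ?thesis unfolding r_def by simp
  qed
  show ?thesis
  proof
    fix n assume nM: "n \<in> M"
    have "Re (cinner e (\<i> *\<^sub>C n)) = 0" using re csub_scaleC[OF sub nM] by blast
    then have "Im (cinner e n) = 0" by (simp add: cinner_scaleC_right)
    moreover have "Re (cinner e n) = 0" using re nM by blast
    ultimately have "cinner e n = 0" by (simp add: complex_eq_iff)
    then show "cinner n (x - m) = 0" unfolding e_def by (metis cinner_commute complex_cnj_zero)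
  qed
qed


instantiation prod :: (complex_vector, complex_vector) complex_vector
begin
definition scaleC_prod :: "complex \<Rightarrow> 'a \<times> 'b \<Rightarrow> 'a \<times> 'b" where
  "scaleC_prod c x = (c *\<^sub>C fst x, c *\<^sub>C snd x)"
instance
  by standard (auto simp: scaleC_prod_def scaleC_add_right scaleC_add_left scaleC_scaleC scaleC_one)
end

instantiation prod :: (complex_inner, complex_inner) complex_inner
begin
definition cinner_prod :: "'a \<times> 'b \<Rightarrow> 'a \<times> 'b \<Rightarrow> complex" where
  "cinner_prod x y = cinner (fst x) (fst y) + cinner (snd x) (snd y)"
instance
proof
  fix r :: real and x y z :: "'a \<times> 'b" and c :: complex
  show "scaleR r x = complex_of_real r *\<^sub>C x"
    by (simp add: scaleR_prod_def scaleC_prod_def scaleR_scaleC)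
  show "cinner (x + y) z = cinner x z + cinner y z"
    by (simp add: cinner_prod_def cinner_add_left)
  show "cinner (c *\<^sub>C x) y = c * cinner x y"
    by (simp add: cinner_prod_def scaleC_prod_def cinner_scaleC_left distrib_left)
  show "cinner y x = cnj (cinner x y)"
    by (simp add: cinner_prod_def cinner_commute[of "fst y"] cinner_commute[of "snd y"])
  have cx: "cinner x x = complex_of_real (norm (fst x)^2 + norm (snd x)^2)"
    by (simp add: cinner_prod_def cinner_self)
  show "0 \<le> Re (cinner x x)" unfolding cx by simp
  show "(cinner x x = 0) = (x = 0)" unfolding cx
    by (smt (verit) norm_eq_zero of_real_eq_0_iff prod_eq_iff zero_le_power2 zero_less_power2 fst_zero snd_zero)
  show "norm x = sqrt (Re (cinner x x))" unfolding cx by (simp add: norm_prod_def)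
qed
end

instance prod :: (chilbert_space, chilbert_space) chilbert_space ..

lemma clin_zero: "clinear_on S f \<Longrightarrow> 0 \<in> S \<Longrightarrow> f 0 = 0"
  unfolding clinear_on_def by (metis add_0 add_cancel_right_right)

lemma graph_csub:
  assumes "csubspace S" "clinear_on S f"
  shows "csubspace (op_graph S f)"
  using assms unfolding csubspace_def op_graph_def
  apply (intro conjI)
  subgoal using clin_zero[OF assms(2)] by (metis (mono_tags, lifting) mem_Collect_eq zero_prod_def)
  subgoal unfolding clinear_on_def by auto
  subgoal unfolding clinear_on_def by (auto simp: scaleC_prod_def)
  done

lemma dense_zero:
  fixes w :: "'a::complex_inner"
  assumes cl: "closure S = UNIV" and h: "\<forall>x\<in>S. cinner x w = 0"
  shows "w = 0"
proof -
  define g where "g x = (norm (x + w)^2 - norm x^2 - norm w^2) / 2" for x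
  have g: "g x = Re (cinner x w)" for x unfolding g_def by (simp add: norm_add_sq)
  have "continuous_on UNIV g" unfolding g_def by (auto intro!: continuous_intros)
  then have "closed {x. g x = 0}" by (simp add: closed_Collect_eq)
  moreover have "S \<subseteq> {x. g x = 0}" using h g by auto
  ultimately have "closure S \<subseteq> {x. g x = 0}" by (rule closure_minimal[rotated])
  then have "g w = 0" using cl by auto
  then have "norm w ^2 = 0" using g cinner_self[of w] by simp
  then show ?thesis by simp
qed

lemma adj_prop:
  assumes "v \<in> adj_dom S f"
  shows "\<forall>u\<in>S. cinner (f u) v = cinner u (adj S f v)"
proof -
  from assms obtain w where "\<forall>u\<in>S. cinner (f u) v = cinner u w" by (auto simp: adj_dom_def)
  then have "\<exists>w. \<forall>u\<in>S. cinner (f u) v = cinner u w" by blast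
  from someI_ex[OF this] show ?thesis unfolding adj_def .
qed

lemma key:
  fixes S :: "'a::chilbert_space set" and f :: "'a \<Rightarrow> 'b::chilbert_space"
  assumes op: "densely_defined_closed_op S f"
    and H: "\<forall>v\<in>adj_dom S f. cinner (adj S f v) y = cinner v z"
  shows "y \<in> S \<and> f y = z"
proof -
  have sub: "csubspace S" and lin: "clinear_on S f" and dense: "closure S = UNIV"
    and cl: "closed (op_graph S f)" using op unfolding densely_defined_closed_op_def by auto
  have gs: "csubspace (op_graph S f)" by (rule graph_csub[OF sub lin])
  obtain mm where mmG: "mm \<in> op_graph S f" and mmin: "\<forall>n\<in>op_graph S f. norm ((y,z) - mm)^2 \<le> norm ((y,z) - n)^2"
    using proj_exists[OF gs cl, of "(y,z)"] by blast
  obtain a where aS: "a \<in> S" and mma: "mm = (a, f a)" using mmG unfolding op_graph_def by auto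
  have orth: "\<forall>n\<in>op_graph S f. cinner n ((y,z) - mm) = 0" by (rule proj_orth[OF gs mmG mmin])
  define p where "p = y - a"
  define r where "r = z - f a"
  have o2: "cinner x p + cinner (f x) r = 0" if "x \<in> S" for x
  proof -
    have "(x, f x) \<in> op_graph S f" using that unfolding op_graph_def by auto
    then show ?thesis using orth unfolding mma p_def r_def by (auto simp: cinner_prod_def)
  qed
  have o3: "cinner (f x) r = cinner x (- p)" if "x \<in> S" for x
    using o2[OF that] by (simp add: cinner_minus_right eq_neg_iff_add_eq_0 add.commute)
  then have rdom: "r \<in> adj_dom S f" unfolding adj_dom_def by blast
  have "\<forall>x\<in>S. cinner x (adj S f r - (- p)) = 0"
  proof
    fix x assume xS: "x \<in> S"
    have "cinner x (adj S f r) = cinner x (- p)" using adj_prop[OF rdom] o3[OF xS] xS by metis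
    then show "cinner x (adj S f r - (- p)) = 0" by (simp only: cinner_diff_right) simp
  qed
  then have "adj S f r - (- p) = 0" by (rule dense_zero[OF dense])
  then have adjr: "adj S f r = - p" by (simp add: eq_neg_iff_add_eq_0)
  have h1: "cinner (- p) y = cinner r z" using H rdom adjr by auto
  have h2: "cinner (- p) a = cinner r (f a)"
    using o3[OF aS] by (metis cinner_commute)
  have e1: "cinner (- p) p = cinner (- p) y - cinner (- p) a"
    using cinner_diff_right[of "- p" y a] p_def by simp
  have e2: "cinner r r = cinner r z - cinner r (f a)"
    using cinner_diff_right[of r z "f a"] r_def by simp
  have "cinner (- p) p = cinner r r" using e1 e2 h1 h2 by simp
  then have "- complex_of_real (norm p ^2) = complex_of_real (norm r ^ 2)"
    by (simp add: cinner_minus_left cinner_self)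
  then have "- (norm p ^2) = norm r ^ 2" by (metis of_real_eq_iff of_real_minus)
  then have "norm p ^2 = 0" "norm r ^2 = 0" by (smt (verit) zero_le_power2)+
  then have "p = 0" "r = 0" by auto
  then show ?thesis using aS unfolding p_def r_def by auto
qed

theorem corollary2p6:
  fixes SG :: "'h0::chilbert_space set" and G :: "'h0 \<Rightarrow> 'h1::chilbert_space"
    and SD :: "'h1 set" and D :: "'h1 \<Rightarrow> 'h0"
  assumes "densely_defined_closed_op SG G"
    and "densely_defined_closed_op SD D"
    and "op_subset (adj_dom SG G) (\<lambda>v. - adj SG G v) SD D"
  shows "(\<forall>u \<in> BD SG G SD D. G u \<in> BD SD D SG G) \<and> (\<forall>q \<in> BD SD D SG G. D q \<in> BD SG G SD D)"
proof -
  have F1: "w \<in> SD" "D w = - adj SG G w" if "w \<in> adj_dom SG G" for w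
    using assms(3) that unfolding op_subset_def by auto
  have DG: "v \<in> SG \<and> G v = - adj SD D v" if vd: "v \<in> adj_dom SD D" for v
  proof (rule key[OF assms(1)], intro ballI)
    fix w assume wd: "w \<in> adj_dom SG G"
    have "cinner (D w) v = cinner w (adj SD D v)" using adj_prop[OF vd] F1(1)[OF wd] by blast
    then show "cinner (adj SG G w) v = cinner w (- adj SD D v)"
      using F1(2)[OF wd] by (simp add: cinner_minus_left cinner_minus_right) (metis minus_minus)
  qed
  show ?thesis
  proof (intro conjI ballI)
    fix u assume u: "u \<in> BD SG G SD D"
    then have uS: "u \<in> SG" and uo: "\<forall>v\<in>adj_dom SD D. cinner u v + cinner (G u) (G v) = 0"
      unfolding BD_def graph_inner_def by auto
    have K: "G u \<in> SD \<and> D (G u) = u"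
    proof (rule key[OF assms(2)], intro ballI)
      fix v assume vd: "v \<in> adj_dom SD D"
      have "cinner u v + cinner (G u) (- adj SD D v) = 0" using uo vd DG[OF vd] by auto
      then have "cinner (G u) (adj SD D v) = cinner u v"
        by (simp add: cinner_minus_right)
      then show "cinner (adj SD D v) (G u) = cinner v u" by (metis cinner_commute)
    qed
    show "G u \<in> BD SD D SG G" unfolding BD_def graph_inner_def
    proof (intro CollectI conjI ballI)
      show "G u \<in> SD" using K by simp
      fix w assume wd: "w \<in> adj_dom SG G"
      have "cinner (G u) w = cinner u (adj SG G w)" using adj_prop[OF wd] uS by blast
      then show "cinner (G u) w + cinner (D (G u)) (D w) = 0"
        using K F1(2)[OF wd] by (simp add: cinner_minus_right)
    qed
  next
    fix q assume q: "q \<in> BD SD D SG G"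
    then have qS: "q \<in> SD" and qo: "\<forall>w\<in>adj_dom SG G. cinner q w + cinner (D q) (D w) = 0"
      unfolding BD_def graph_inner_def by auto
    have K: "D q \<in> SG \<and> G (D q) = q"
    proof (rule key[OF assms(1)], intro ballI)
      fix w assume wd: "w \<in> adj_dom SG G"
      have "cinner q w + cinner (D q) (- adj SG G w) = 0" using qo wd F1(2)[OF wd] by auto
      then have "cinner (D q) (adj SG G w) = cinner q w"
        by (simp add: cinner_minus_right)
      then show "cinner (adj SG G w) (D q) = cinner w q" by (metis cinner_commute)
    qed
    show "D q \<in> BD SG G SD D" unfolding BD_def graph_inner_def
    proof (intro CollectI conjI ballI)
      show "D q \<in> SG" using K by simp
      fix v assume vd: "v \<in> adj_dom SD D"
      have "cinner (D q) v = cinner q (adj SD D v)" using adj_prop[OF vd] qS by blast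
      then show "cinner (D q) v + cinner (G (D q)) (G v) = 0"
        using K DG[OF vd] by (simp add: cinner_minus_right)
    qed
  qed
qed

end
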